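(* Let $\ell$ be a positive integer and let $(T^-,T^+)$ be an ordered pair of rooted plane trees with a total of $\ell-1$ edges. Number the levels of each tree so that its root is at level $1$. Call the non-root vertices at odd levels of $T^-$ and at even levels of $T^+$ "low", and the non-root vertices at even levels of $T^-$ and at odd levels of $T^+$ "high". Label the low vertices with $1,2,3,\dots$ consecutively, processing levels from the deepest upward and, within a level, from left to right; label the high vertices with $\ell,\ell-1,\ell-2,\dots$ consecutively in the same order (deepest level first, left to right within a level). Let $b\in[\ell]$ be the unique label not used, and label the roots of $T^-$ and $T^+$ by $b^-$ and $b^+$. Define $\mu:[\ell]\to[\ell]$ by $\mu(b)=b$ and, for $i\neq b$, $\mu(i)=$ the label of the parent of the vertex labelled $i$, where a parent labelled $b^\pm$ is read as $b$. Then $\mu$ is a partition (weakly decreasing) and $\mu\in\mathcal{P}^\ell(1)$.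
   Context: $[n]=\{1,\dots,n\}$. A rooted plane tree is a rooted tree in which the children of each vertex are linearly ordered (left to right). $\mathcal{P}^\ell$ denotes the set of partitions $(\mu_1\geq\dots\geq\mu_\ell>0)$ with exactly $\ell$ parts and $\mu_1\leq\ell$, regarded as weakly decreasing maps $[\ell]\to[\ell]$. $\tau_\ell:\mathcal{P}^\ell\to\mathcal{P}^\ell$ is $\tau_\ell(\mu_1,\dots,\mu_\ell)=(\ell+1-\mu_\ell,\dots,\ell+1-\mu_1)$. The sets $\mathcal{P}^\ell(1)\subseteq\mathcal{P}^\ell$ are defined inductively by $\mathcal{P}^1(1)=\{(1)\}$ and, for $\ell\geq2$, $\mathcal{P}^\ell(1)=D_\ell\cup\tau_\ell(D_\ell)$ where $D_\ell=\{\mu\in\mathcal{P}^\ell:(\mu_1,\dots,\mu_{\ell-1})\in\mathcal{P}^{\ell-1}(1)\}$. *)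

theory Defs
  imports Main
begin

datatype ptree = Node "ptree list"

fun edges :: "ptree \<Rightarrow> nat" where
  "edges (Node ts) = length ts + sum_list (map edges ts)"

text \<open>Vertices are addressed by paths from the root (list of child indices).
  The root is the empty path; the vertex at path p lies at level (length p + 1).\<close>
inductive path_in :: "ptree \<Rightarrow> nat list \<Rightarrow> bool" where
  root: "path_in t []"
| child: "i < length ts \<Longrightarrow> path_in (ts ! i) p \<Longrightarrow> path_in (Node ts) (i # p)"

text \<open>A vertex of the pair is (s, p): s = False means T^-, s = True means T^+.\<close>
type_synonym vtx = "bool \<times> nat list"

definition nonroot_verts :: "ptree \<Rightarrow> ptree \<Rightarrow> vtx set" where
  "nonroot_verts Tm Tp = {(s, p). p \<noteq> [] \<and> path_in (if s then Tp else Tm) p}"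

fun is_low :: "vtx \<Rightarrow> bool" where
  "is_low (s, p) = (if s then even (length p + 1) else odd (length p + 1))"

text \<open>Processing order: deeper levels first; within a level, left to right
  (lexicographic order of paths of equal length).\<close>
fun before :: "vtx \<Rightarrow> vtx \<Rightarrow> bool" where
  "before (s, p) (s', q) =
     (length q < length p \<or> (length p = length q \<and> (p, q) \<in> lexord less_than))"

definition lab :: "nat \<Rightarrow> ptree \<Rightarrow> ptree \<Rightarrow> vtx \<Rightarrow> nat" where
  "lab l Tm Tp v =
     (if is_low v then 1 + card {w \<in> nonroot_verts Tm Tp. is_low w \<and> before w v}
      else l - card {w \<in> nonroot_verts Tm Tp. \<not> is_low w \<and> before w v})"

definition blab :: "nat \<Rightarrow> ptree \<Rightarrow> ptree \<Rightarrow> nat" where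
  "blab l Tm Tp = (THE b. b \<in> {1..l} \<and> b \<notin> lab l Tm Tp ` nonroot_verts Tm Tp)"

definition labr :: "nat \<Rightarrow> ptree \<Rightarrow> ptree \<Rightarrow> vtx \<Rightarrow> nat" where
  "labr l Tm Tp v = (if snd v = [] then blab l Tm Tp else lab l Tm Tp v)"

fun parent :: "vtx \<Rightarrow> vtx" where
  "parent (s, p) = (s, butlast p)"

definition mu_fun :: "nat \<Rightarrow> ptree \<Rightarrow> ptree \<Rightarrow> nat \<Rightarrow> nat" where
  "mu_fun l Tm Tp i =
     (if i = blab l Tm Tp then blab l Tm Tp
      else labr l Tm Tp (parent (THE v. v \<in> nonroot_verts Tm Tp \<and> lab l Tm Tp v = i)))"

definition mu_list :: "nat \<Rightarrow> ptree \<Rightarrow> ptree \<Rightarrow> nat list" where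
  "mu_list l Tm Tp = map (mu_fun l Tm Tp) [1..<l+1]"

definition Pl :: "nat \<Rightarrow> nat list set" where
  "Pl l = {mu. length mu = l \<and> sorted_wrt (\<ge>) mu \<and> (\<forall>x \<in> set mu. 1 \<le> x \<and> x \<le> l)}"

definition tau :: "nat \<Rightarrow> nat list \<Rightarrow> nat list" where
  "tau l mu = rev (map (\<lambda>x. l + 1 - x) mu)"

fun P1 :: "nat \<Rightarrow> nat list set" where
  "P1 0 = {}"
| "P1 (Suc 0) = {[1]}"
| "P1 (Suc (Suc n)) =
     (let D = {mu \<in> Pl (Suc (Suc n)). butlast mu \<in> P1 (Suc n)} in D \<union> tau (Suc (Suc n)) ` D)"

end

theory Submission
  imports Defs
begin


lemma before_irrefl: "\<not> before v v"
  by (cases v) (auto simp: lexord_irreflexive)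

lemma before_trans: "before u v \<Longrightarrow> before v w \<Longrightarrow> before u w"
  apply (cases u; cases v; cases w)
  apply (auto intro: lexord_trans)
  done

lemma same_type_len: "is_low (s,p) = is_low (s',q) \<Longrightarrow> length p = length q \<Longrightarrow> s = s'"
  by (cases s; cases s') auto

lemma lexord_lt_total: "(p,q) \<in> lexord less_than \<or> p = q \<or> (q,p) \<in> lexord less_than"
proof -
  have "total less_than" unfolding total_on_def by auto
  then have "total (lexord less_than)" by (rule total_lexord)
  then show ?thesis unfolding total_on_def by blast
qed

lemma before_total: "is_low v = is_low w \<Longrightarrow> v \<noteq> w \<Longrightarrow> before v w \<or> before w v"
proof (cases v, cases w)
  fix s p s' q assume v: "v = (s,p)" and w: "w = (s',q)" and t: "is_low v = is_low w" and ne: "v \<noteq> w"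
  show ?thesis
  proof (cases "length p = length q")
    case True
    then have "s = s'" using same_type_len t v w by blast
    then have "p \<noteq> q" using ne v w by auto
    then show ?thesis using lexord_lt_total[of p q] True v w by auto
  next
    case False then show ?thesis using v w by auto
  qed
qed

lemma lexord_butlast: "length p = length q \<Longrightarrow> (p,q) \<in> lexord r \<Longrightarrow>
   butlast p = butlast q \<or> (butlast p, butlast q) \<in> lexord r"
proof (induction p arbitrary: q)
  case Nil then show ?case by simp
next
  case (Cons a p)
  then obtain b q' where q: "q = b # q'" by (cases q) auto
  show ?case
  proof (cases "p = []")
    case True then show ?thesis using Cons.prems q by simp
  next
    case False
    then have "q' \<noteq> []" using Cons.prems q by auto
    then show ?thesis using Cons.prems Cons.IH[of q'] q False by auto
  qed
qed

lemma is_low_parent: "p \<noteq> [] \<Longrightarrow> is_low (s, butlast p) = (\<not> is_low (s,p))"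
  by (cases s; cases p) auto

lemma before_parent:
  assumes "is_low v = is_low w" "before v w" "snd v \<noteq> []" "butlast (snd w) \<noteq> []"
  shows "butlast (snd v) \<noteq> [] \<and> (parent v = parent w \<or> before (parent v) (parent w))"
proof (cases v, cases w)
  fix s p s' q assume v: "v = (s,p)" and w: "w = (s',q)"
  show ?thesis
  proof (cases "length p = length q")
    case True
    then have "s = s'" using same_type_len assms v w by blast
    moreover have "(p,q) \<in> lexord less_than" using assms True v w by simp
    ultimately show ?thesis using lexord_butlast[of p q less_than] True v w assms
      by (auto simp: butlast_conv_take)
  next
    case False then show ?thesis using v w assms by (auto simp: butlast_conv_take)
  qed
qed



definition labN :: "vtx set \<Rightarrow> nat \<Rightarrow> vtx \<Rightarrow> nat" where
  "labN N l v =
     (if is_low v then 1 + card {w \<in> N. is_low w \<and> before w v}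
      else l - card {w \<in> N. \<not> is_low w \<and> before w v})"
definition bN :: "vtx set \<Rightarrow> nat \<Rightarrow> nat" where
  "bN N l = (THE b. b \<in> {1..l} \<and> b \<notin> labN N l ` N)"
definition labrN :: "vtx set \<Rightarrow> nat \<Rightarrow> vtx \<Rightarrow> nat" where
  "labrN N l v = (if snd v = [] then bN N l else labN N l v)"
definition vofN :: "vtx set \<Rightarrow> nat \<Rightarrow> nat \<Rightarrow> vtx" where
  "vofN N l i = (THE v. v \<in> N \<and> labN N l v = i)"
definition muN :: "vtx set \<Rightarrow> nat \<Rightarrow> nat \<Rightarrow> nat" where
  "muN N l i = (if i = bN N l then bN N l else labrN N l (parent (vofN N l i)))"
definition mulN :: "vtx set \<Rightarrow> nat \<Rightarrow> nat list" where
  "mulN N l = map (muN N l) [1..<l+1]"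

lemma mu_list_eq: "mu_list l Tm Tp = mulN (nonroot_verts Tm Tp) l"
  unfolding mu_list_def mulN_def muN_def mu_fun_def labrN_def labr_def bN_def blab_def
    vofN_def labN_def lab_def ..

locale vs =
  fixes N :: "vtx set" and l :: nat
  assumes fin: "finite N"
    and ne: "\<And>s p. (s,p) \<in> N \<Longrightarrow> p \<noteq> []"
    and pc: "\<And>s p. (s,p) \<in> N \<Longrightarrow> butlast p \<noteq> [] \<Longrightarrow> (s, butlast p) \<in> N"
    and cardN: "card N + 1 = l"
begin

abbreviation "Lo \<equiv> {w \<in> N. is_low w}"
abbreviation "Hi \<equiv> {w \<in> N. \<not> is_low w}"
abbreviation "L \<equiv> card Lo"
abbreviation "H \<equiv> card Hi"
abbreviation "lb \<equiv> labN N l"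

lemma ne': "v \<in> N \<Longrightarrow> snd v \<noteq> []" using ne by (cases v) auto
lemma pc': "v \<in> N \<Longrightarrow> snd (parent v) \<noteq> [] \<Longrightarrow> parent v \<in> N" using pc by (cases v) auto
lemma low_parent: "v \<in> N \<Longrightarrow> is_low (parent v) = (\<not> is_low v)"
proof (cases v)
  case (Pair s p)
  assume "v \<in> N" then have "p \<noteq> []" using ne Pair by auto
  then show ?thesis using is_low_parent[of p s] Pair by simp
qed

lemma LH: "L + H + 1 = l"
proof -
  have "N = Lo \<union> Hi" by auto
  then have "card N = L + H" using fin by (subst card_Un_disjoint[symmetric]) auto
  then show ?thesis using cardN by simp
qed

lemma lab_low: "is_low v \<Longrightarrow> lb v = 1 + card {w \<in> N. is_low w \<and> before w v}"
  by (simp add: labN_def)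
lemma lab_high: "\<not> is_low v \<Longrightarrow> lb v = l - card {w \<in> N. \<not> is_low w \<and> before w v}"
  by (simp add: labN_def)

lemma low_mono: assumes "v \<in> N" "is_low v" "is_low w" "before v w" shows "lb v < lb w"
proof -
  have "{x \<in> N. is_low x \<and> before x v} \<subset> {x \<in> N. is_low x \<and> before x w}"
    using assms before_trans before_irrefl by blast
  then have "card {x \<in> N. is_low x \<and> before x v} < card {x \<in> N. is_low x \<and> before x w}"
    using fin by (intro psubset_card_mono) auto
  then show ?thesis using assms by (simp add: lab_low)
qed

lemma high_mono: assumes "v \<in> N" "\<not> is_low v" "\<not> is_low w" "before v w" shows "lb w < lb v"
proof -
  have "{x \<in> N. \<not> is_low x \<and> before x v} \<subset> {x \<in> N. \<not> is_low x \<and> before x w}"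
    using assms before_trans before_irrefl by blast
  then have "card {x \<in> N. \<not> is_low x \<and> before x v} < card {x \<in> N. \<not> is_low x \<and> before x w}"
    using fin by (intro psubset_card_mono) auto
  moreover have "card {x \<in> N. \<not> is_low x \<and> before x w} \<le> card N"
    using fin by (intro card_mono) auto
  ultimately show ?thesis using assms cardN by (simp add: lab_high)
qed

lemma low_range: assumes "v \<in> N" "is_low v" shows "1 \<le> lb v \<and> lb v \<le> L"
proof -
  have "{x \<in> N. is_low x \<and> before x v} \<subseteq> Lo - {v}" using before_irrefl by blast
  then have "card {x \<in> N. is_low x \<and> before x v} \<le> card (Lo - {v})"
    using fin by (intro card_mono) auto
  moreover have "card (Lo - {v}) = L - 1" using assms fin by simp
  moreover have "L \<ge> 1"
  proof -
    have "finite Lo" using fin by simp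
    moreover have "v \<in> Lo" using assms by simp
    ultimately show ?thesis by (metis One_nat_def Suc_leI card_gt_0_iff empty_iff)
  qed
  ultimately show ?thesis using assms by (simp add: lab_low)
qed

lemma high_range: assumes "v \<in> N" "\<not> is_low v" shows "L + 2 \<le> lb v \<and> lb v \<le> l"
proof -
  have "{x \<in> N. \<not> is_low x \<and> before x v} \<subseteq> Hi - {v}" using before_irrefl by blast
  then have "card {x \<in> N. \<not> is_low x \<and> before x v} \<le> card (Hi - {v})"
    using fin by (intro card_mono) auto
  moreover have "card (Hi - {v}) = H - 1" using assms fin by simp
  moreover have "H \<ge> 1"
  proof -
    have "finite Hi" using fin by simp
    moreover have "v \<in> Hi" using assms by simp
    ultimately show ?thesis by (metis One_nat_def Suc_leI card_gt_0_iff empty_iff)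
  qed
  ultimately show ?thesis using assms LH by (simp add: lab_high)
qed

lemma lab_inj: assumes "v \<in> N" "w \<in> N" "lb v = lb w" shows "v = w"
proof (rule ccontr)
  assume vw: "v \<noteq> w"
  show False
  proof (cases "is_low v = is_low w")
    case True
    then have "before v w \<or> before w v" using before_total vw by blast
    then show False using True assms low_mono high_mono by (metis less_irrefl)
  next
    case False
    then have "(is_low v \<and> \<not> is_low w) \<or> (is_low w \<and> \<not> is_low v)" by blast
    then show False using assms low_range[of v] high_range[of w] low_range[of w] high_range[of v]
      by auto
  qed
qed

lemma inj: "inj_on lb N" using lab_inj by (meson inj_onI)

lemma img: "lb ` N = {1..L} \<union> {L+2..l}"
proof -
  have a: "lb ` Lo \<subseteq> {1..L}" using low_range by auto
  have b: "lb ` Hi \<subseteq> {L+2..l}" using high_range by auto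
  have "card (lb ` Lo) = L" using inj by (intro card_image inj_on_subset[OF inj]) auto
  then have a': "lb ` Lo = {1..L}" using a by (intro card_subset_eq) auto
  have "card (lb ` Hi) = H" using inj by (intro card_image inj_on_subset[OF inj]) auto
  moreover have "card {L+2..l} = H" using LH by simp
  ultimately have b': "lb ` Hi = {L+2..l}" using b by (intro card_subset_eq) auto
  have "N = Lo \<union> Hi" by auto
  then have "lb ` N = lb ` Lo \<union> lb ` Hi" by (metis image_Un)
  then show ?thesis using a' b' by simp
qed

lemma b_eq: "bN N l = L + 1"
  unfolding bN_def
proof (rule the_equality)
  show "L + 1 \<in> {1..l} \<and> L + 1 \<notin> lb ` N" using img LH by auto
next
  fix b assume "b \<in> {1..l} \<and> b \<notin> lb ` N"
  then show "b = L + 1" using img by auto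
qed

lemma vof: assumes "i \<in> {1..l}" "i \<noteq> L + 1"
  shows "vofN N l i \<in> N \<and> lb (vofN N l i) = i"
proof -
  have "i \<in> lb ` N" using img assms by auto
  then obtain v where v: "v \<in> N" "lb v = i" by auto
  have "vofN N l i = v" unfolding vofN_def
    by (rule the_equality) (use v lab_inj in auto)
  then show ?thesis using v by simp
qed

lemma vof_eq: "v \<in> N \<Longrightarrow> vofN N l (lb v) = v"
  unfolding vofN_def by (rule the_equality) (use lab_inj in auto)

lemma mu_b: "muN N l (L+1) = L + 1" by (simp add: muN_def b_eq)

lemma mu_other: "i \<noteq> L + 1 \<Longrightarrow> muN N l i = labrN N l (parent (vofN N l i))"
  by (simp add: muN_def b_eq)

lemma low_of_lab: "v \<in> N \<Longrightarrow> lb v \<le> L \<Longrightarrow> is_low v"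
  using high_range by fastforce
lemma high_of_lab: "v \<in> N \<Longrightarrow> lb v \<ge> L + 2 \<Longrightarrow> \<not> is_low v"
  using low_range by fastforce

lemma mu_low: assumes "i \<in> {1..L}" shows "L + 1 \<le> muN N l i \<and> muN N l i \<le> l"
proof -
  have i: "i \<in> {1..l}" "i \<noteq> L + 1" using assms LH by auto
  let ?v = "vofN N l i"
  have v: "?v \<in> N" "lb ?v = i" using vof[OF i] by auto
  have lo: "is_low ?v" using low_of_lab v assms by auto
  show ?thesis
  proof (cases "snd (parent ?v) = []")
    case True then show ?thesis using mu_other[OF i(2)] LH by (simp add: labrN_def b_eq)
  next
    case False
    have "parent ?v \<in> N" using pc' False v by auto
    moreover have "\<not> is_low (parent ?v)" using low_parent v lo by auto
    ultimately have "L + 2 \<le> lb (parent ?v) \<and> lb (parent ?v) \<le> l" using high_range by blast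
    then show ?thesis using mu_other[OF i(2)] False by (simp add: labrN_def)
  qed
qed

lemma mu_high: assumes "i \<in> {L+2..l}" shows "1 \<le> muN N l i \<and> muN N l i \<le> L + 1"
proof -
  have i: "i \<in> {1..l}" "i \<noteq> L + 1" using assms LH by auto
  let ?v = "vofN N l i"
  have v: "?v \<in> N" "lb ?v = i" using vof[OF i] by auto
  have lo: "\<not> is_low ?v" using high_of_lab v assms by auto
  show ?thesis
  proof (cases "snd (parent ?v) = []")
    case True then show ?thesis using mu_other[OF i(2)] LH by (simp add: labrN_def b_eq)
  next
    case False
    have "parent ?v \<in> N" using pc' False v by auto
    moreover have "is_low (parent ?v)" using low_parent v lo by auto
    ultimately have "1 \<le> lb (parent ?v) \<and> lb (parent ?v) \<le> L" using low_range by blast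
    then show ?thesis using mu_other[OF i(2)] False by (simp add: labrN_def)
  qed
qed

end


context vs begin

lemma mu_mono_low: assumes "1 \<le> i" "i < j" "j \<le> L" shows "muN N l j \<le> muN N l i"
proof -
  have i: "i \<in> {1..l}" "i \<noteq> L + 1" and j: "j \<in> {1..l}" "j \<noteq> L + 1" using assms LH by auto
  let ?vi = "vofN N l i" and ?vj = "vofN N l j"
  have vi: "?vi \<in> N" "lb ?vi = i" using vof[OF i] by auto
  have vj: "?vj \<in> N" "lb ?vj = j" using vof[OF j] by auto
  have li: "is_low ?vi" using low_of_lab vi assms by auto
  have lj: "is_low ?vj" using low_of_lab vj assms by auto
  have bef: "before ?vi ?vj"
  proof -
    have "?vi \<noteq> ?vj" using vi vj assms by auto
    then have "before ?vi ?vj \<or> before ?vj ?vi" using before_total li lj by blast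
    moreover have "\<not> before ?vj ?vi" using low_mono[OF vj(1) lj li] vi vj assms by auto
    ultimately show ?thesis by blast
  qed
  show ?thesis
  proof (cases "snd (parent ?vj) = []")
    case True
    then show ?thesis using mu_other[OF j(2)] mu_low[of i] assms by (simp add: labrN_def b_eq)
  next
    case False
    have "butlast (snd ?vi) \<noteq> [] \<and> (parent ?vi = parent ?vj \<or> before (parent ?vi) (parent ?vj))"
      using before_parent[of ?vi ?vj] li lj bef ne'[OF vi(1)] False by (cases ?vj) auto
    moreover have pvi: "snd (parent ?vi) = butlast (snd ?vi)" by (cases ?vi) auto
    ultimately have nr: "snd (parent ?vi) \<noteq> []"
      and o: "parent ?vi = parent ?vj \<or> before (parent ?vi) (parent ?vj)" by auto
    have "parent ?vi \<in> N" "parent ?vj \<in> N" using pc' nr False vi vj by auto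
    moreover have "\<not> is_low (parent ?vi)" "\<not> is_low (parent ?vj)" using low_parent vi vj li lj by auto
    ultimately have "lb (parent ?vj) \<le> lb (parent ?vi)" using o high_mono
      by (metis less_imp_le order_refl)
    then show ?thesis using mu_other[OF j(2)] mu_other[OF i(2)] nr False by (simp add: labrN_def)
  qed
qed

lemma mu_mono_high: assumes "L + 2 \<le> i" "i < j" "j \<le> l" shows "muN N l j \<le> muN N l i"
proof -
  have i: "i \<in> {1..l}" "i \<noteq> L + 1" and j: "j \<in> {1..l}" "j \<noteq> L + 1" using assms LH by auto
  let ?vi = "vofN N l i" and ?vj = "vofN N l j"
  have vi: "?vi \<in> N" "lb ?vi = i" using vof[OF i] by auto
  have vj: "?vj \<in> N" "lb ?vj = j" using vof[OF j] by auto
  have li: "\<not> is_low ?vi" using high_of_lab vi assms by auto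
  have lj: "\<not> is_low ?vj" using high_of_lab vj assms by auto
  have bef: "before ?vj ?vi"
  proof -
    have "?vi \<noteq> ?vj" using vi vj assms by auto
    then have "before ?vi ?vj \<or> before ?vj ?vi" using before_total li lj by blast
    moreover have "\<not> before ?vi ?vj" using high_mono[OF vi(1) li lj] vi vj assms by auto
    ultimately show ?thesis by blast
  qed
  show ?thesis
  proof (cases "snd (parent ?vi) = []")
    case True
    then show ?thesis using mu_other[OF i(2)] mu_high[of j] assms by (simp add: labrN_def b_eq)
  next
    case False
    have "butlast (snd ?vj) \<noteq> [] \<and> (parent ?vj = parent ?vi \<or> before (parent ?vj) (parent ?vi))"
      using before_parent[of ?vj ?vi] li lj bef ne'[OF vj(1)] False by (cases ?vi) auto
    moreover have pvi: "snd (parent ?vj) = butlast (snd ?vj)" by (cases ?vj) auto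
    ultimately have nr: "snd (parent ?vj) \<noteq> []"
      and o: "parent ?vj = parent ?vi \<or> before (parent ?vj) (parent ?vi)" by auto
    have "parent ?vi \<in> N" "parent ?vj \<in> N" using pc' nr False vi vj by auto
    moreover have "is_low (parent ?vi)" "is_low (parent ?vj)" using low_parent vi vj li lj by auto
    ultimately have "lb (parent ?vj) \<le> lb (parent ?vi)" using o low_mono
      by (metis less_imp_le order_refl)
    then show ?thesis using mu_other[OF j(2)] mu_other[OF i(2)] nr False by (simp add: labrN_def)
  qed
qed

lemma mu_mono: assumes "1 \<le> i" "i < j" "j \<le> l" shows "muN N l j \<le> muN N l i"
proof -
  consider "j \<le> L" | "j = L + 1" | "j \<ge> L + 2" by linarith
  then show ?thesis
  proof cases
    case 1 then show ?thesis using mu_mono_low assms by blast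
  next
    case 2 then show ?thesis using mu_b mu_low[of i] assms by auto
  next
    case 3
    consider "i \<le> L" | "i = L + 1" | "i \<ge> L + 2" by linarith
    then show ?thesis
    proof cases
      case 1 then show ?thesis using mu_low[of i] mu_high[of j] assms 3 by force
    next
      case 2 then show ?thesis using mu_b mu_high[of j] assms 3 by auto
    next
      case 3 then show ?thesis using mu_mono_high assms by blast
    qed
  qed
qed

lemma mu_range: assumes "1 \<le> i" "i \<le> l" shows "1 \<le> muN N l i \<and> muN N l i \<le> l"
proof -
  consider "i \<le> L" | "i = L + 1" | "i \<ge> L + 2" by linarith
  then show ?thesis
  proof cases
    case 1 then show ?thesis using mu_low[of i] assms by auto
  next
    case 2 then show ?thesis using mu_b LH by auto
  next
    case 3 then show ?thesis using mu_high[of i] assms LH by auto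
  qed
qed

lemma mul_Pl: "mulN N l \<in> Pl l"
  unfolding Pl_def mulN_def
proof (intro CollectI conjI ballI)
  show "length (map (muN N l) [1..<l + 1]) = l" by simp
  show "sorted_wrt (\<ge>) (map (muN N l) [1..<l + 1])"
    unfolding sorted_wrt_iff_nth_less
  proof (intro allI impI)
    fix i j assume "i < j" "j < length (map (muN N l) [1..<l + 1])"
    then show "map (muN N l) [1..<l + 1] ! j \<le> map (muN N l) [1..<l + 1] ! i"
    proof -
      have jl: "j < l" using \<open>j < length _\<close> by (simp only: length_map length_upt)
      have "map (muN N l) [1..<l + 1] ! j = muN N l (1 + j)"
        using jl by (simp del: upt_Suc)
      moreover have "map (muN N l) [1..<l + 1] ! i = muN N l (1 + i)"
        using jl \<open>i < j\<close> by (simp del: upt_Suc)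
      ultimately show ?thesis using mu_mono[of "1+i" "1+j"] jl \<open>i < j\<close> by simp
    qed
  qed
next
  fix x assume "x \<in> set (map (muN N l) [1..<l + 1])"
  then obtain i where "i \<in> set [1..<l + 1]" "x = muN N l i" by auto
  then have "1 \<le> i" "i \<le> l" "x = muN N l i" by (simp_all del: upt_Suc)
  then show "1 \<le> x" "x \<le> l" using mu_range by blast+
qed

end


context vs begin

lemma remove:
  assumes u: "u \<in> N" "\<not> is_low u" "lb u = l"
    and mx: "\<And>w. w \<in> N \<Longrightarrow> length (snd w) \<le> length (snd u)"
  shows "vs (N - {u}) (l - 1) \<and> mulN (N - {u}) (l - 1) = butlast (mulN N l)"
proof -
  let ?N = "N - {u}" and ?l = "l - 1"
  have c1: "card N \<ge> 1" 
  proof -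
    have "card N > 0" using u fin card_gt_0_iff by blast
    then show ?thesis by simp
  qed
  have cN: "card ?N = card N - 1" using u fin by simp
  have par_ne: "\<And>w. w \<in> N \<Longrightarrow> parent w \<noteq> u"
  proof
    fix w assume "w \<in> N" "parent w = u"
    then have "length (snd u) < length (snd w)" using ne' by (cases w) auto
    then show False using mx \<open>w \<in> N\<close> by (meson not_le)
  qed
  interpret N': vs ?N ?l
  proof
    show "finite ?N" using fin by simp
    show "\<And>s p. (s, p) \<in> ?N \<Longrightarrow> p \<noteq> []" using ne by auto
    show "\<And>s p. (s, p) \<in> ?N \<Longrightarrow> butlast p \<noteq> [] \<Longrightarrow> (s, butlast p) \<in> ?N"
      
    proof -
      fix s p assume "(s, p) \<in> ?N" "butlast p \<noteq> []"
      then have "(s, butlast p) \<in> N" "(s, butlast p) \<noteq> u" using pc par_ne[of "(s,p)"] by auto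
      then show "(s, butlast p) \<in> ?N" by simp
    qed
    show "card ?N + 1 = ?l" using cN c1 cardN by simp
  qed
  have cu: "card {x \<in> N. \<not> is_low x \<and> before x u} = 0"
  proof -
    have "card {x \<in> N. \<not> is_low x \<and> before x u} \<le> card N" using fin by (intro card_mono) auto
    then show ?thesis using u cardN by (simp add: lab_high)
  qed
  then have "{x \<in> N. \<not> is_low x \<and> before x u} = {}" using fin by simp
  then have nob: "\<And>w. w \<in> N \<Longrightarrow> \<not> is_low w \<Longrightarrow> \<not> before w u" by blast
  have bu: "\<And>w. w \<in> N \<Longrightarrow> \<not> is_low w \<Longrightarrow> w \<noteq> u \<Longrightarrow> before u w"
    using nob before_total u by blast
  have labeq: "labN ?N ?l w = lb w" if w: "w \<in> N" "w \<noteq> u" for w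
  proof (cases "is_low w")
    case True
    have "{x \<in> ?N. is_low x \<and> before x w} = {x \<in> N. is_low x \<and> before x w}" using u by auto
    then show ?thesis using True by (simp add: labN_def)
  next
    case False
    have e: "{x \<in> ?N. \<not> is_low x \<and> before x w} = {x \<in> N. \<not> is_low x \<and> before x w} - {u}" by auto
    have uS: "u \<in> {x \<in> N. \<not> is_low x \<and> before x w}" using bu w False u by auto
    have fS: "finite {x \<in> N. \<not> is_low x \<and> before x w}" using fin by simp
    have "card {x \<in> ?N. \<not> is_low x \<and> before x w} = card {x \<in> N. \<not> is_low x \<and> before x w} - 1"
      unfolding e using card_Diff_singleton[OF uS] .
    moreover have "card {x \<in> N. \<not> is_low x \<and> before x w} > 0"
      using fS uS card_gt_0_iff by blast
    ultimately show ?thesis unfolding N'.lab_high[OF False] lab_high[OF False] by linarith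
  qed
  have LL: "card {w \<in> ?N. is_low w} = L" 
  proof -
    have "{w \<in> ?N. is_low w} = Lo" using u by auto
    then show ?thesis by simp
  qed
  have beq: "bN ?N ?l = bN N l" using N'.b_eq b_eq LL by simp
  have mueq: "muN ?N ?l i = muN N l i" if i: "1 \<le> i" "i \<le> ?l" for i
  proof (cases "i = L + 1")
    case True then show ?thesis using N'.mu_b mu_b LL by simp
  next
    case False
    have i': "i \<in> {1..l}" "i \<noteq> L + 1" using i False by auto
    let ?w = "vofN N l i"
    have w: "?w \<in> N" "lb ?w = i" using vof[OF i'] by auto
    have wu: "?w \<noteq> u" using w u i by auto
    have "vofN ?N ?l i = ?w" using N'.vof_eq[of ?w] labeq[OF w(1) wu] w wu by simp
    moreover have "labrN ?N ?l (parent ?w) = labrN N l (parent ?w)"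
    proof (cases "snd (parent ?w) = []")
      case True then show ?thesis using beq by (simp add: labrN_def)
    next
      case False
      then show ?thesis using labeq[of "parent ?w"] pc'[OF w(1)] par_ne[OF w(1)] by (simp add: labrN_def)
    qed
    ultimately show ?thesis using mu_other[OF i'(2)] N'.mu_other[of i] False LL by simp
  qed
  have "l \<ge> 1" using cardN by simp
  then have "[1..<l+1] = [1..<l] @ [l]" by simp
  then have "butlast (mulN N l) = map (muN N l) [1..<l]" unfolding mulN_def by simp
  also have "\<dots> = map (muN ?N ?l) [1..<?l+1]" using mueq \<open>l \<ge> 1\<close> by (auto simp del: upt_Suc intro!: map_cong)
  finally show ?thesis unfolding mulN_def using N'.vs_axioms by simp
qed

end


fun sw :: "vtx \<Rightarrow> vtx" where "sw (s,p) = (\<not> s, p)"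

lemma sw_sw[simp]: "sw (sw v) = v" by (cases v) auto
lemma inj_sw: "inj sw" by (metis injI sw_sw)
lemma low_sw[simp]: "is_low (sw v) = (\<not> is_low v)" by (cases v) auto
lemma bef_sw1[simp]: "before (sw x) y = before x y" by (cases x; cases y) auto
lemma bef_sw2[simp]: "before x (sw y) = before x y" by (cases x; cases y) auto
lemma par_sw[simp]: "parent (sw v) = sw (parent v)" by (cases v) auto
lemma snd_sw[simp]: "snd (sw v) = snd v" by (cases v) auto

lemma sw_set: "{w \<in> sw ` N. P w} = sw ` {w \<in> N. P (sw w)}"
  by (auto intro: rev_image_eqI)

context vs begin

lemma vs_sw: "vs (sw ` N) l"
proof
  show "finite (sw ` N)" using fin by simp
  show "\<And>s p. (s, p) \<in> sw ` N \<Longrightarrow> p \<noteq> []" using ne by force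
  show "\<And>s p. (s, p) \<in> sw ` N \<Longrightarrow> butlast p \<noteq> [] \<Longrightarrow> (s, butlast p) \<in> sw ` N"
  proof -
    fix s p assume "(s, p) \<in> sw ` N" "butlast p \<noteq> []"
    then have "(\<not> s, p) \<in> N" by (metis image_iff sw.simps sw_sw)
    then have "(\<not> s, butlast p) \<in> N" using pc \<open>butlast p \<noteq> []\<close> by blast
    then show "(s, butlast p) \<in> sw ` N" by (metis image_eqI sw.simps sw_sw)
  qed
  show "card (sw ` N) + 1 = l" using cardN card_image inj_sw by (metis inj_on_subset subset_UNIV)
qed

lemma card_sw: "card (sw ` A) = card A" using card_image inj_sw by (metis inj_on_subset subset_UNIV)

lemma lab_sw: assumes "v \<in> N" shows "labN (sw ` N) l (sw v) = l + 1 - lb v"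
proof (cases "is_low v")
  case True
  have "labN (sw ` N) l (sw v) = l - card {w \<in> sw ` N. \<not> is_low w \<and> before w (sw v)}"
    using True by (simp add: labN_def)
  also have "card {w \<in> sw ` N. \<not> is_low w \<and> before w (sw v)} = card {w \<in> N. is_low w \<and> before w v}"
    unfolding sw_set by (simp add: card_sw)
  finally show ?thesis using True by (simp add: labN_def)
next
  case False
  have "labN (sw ` N) l (sw v) = 1 + card {w \<in> sw ` N. is_low w \<and> before w (sw v)}"
    using False by (simp add: labN_def)
  also have "card {w \<in> sw ` N. is_low w \<and> before w (sw v)} = card {w \<in> N. \<not> is_low w \<and> before w v}"
    unfolding sw_set by (simp add: card_sw)
  finally show ?thesis using False high_range[OF assms False] by (simp add: labN_def)
qed

lemma Lsw: "card {w \<in> sw ` N. is_low w} = H"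
  unfolding sw_set by (simp add: card_sw)

lemma mu_sw: assumes "1 \<le> i" "i \<le> l" shows "muN (sw ` N) l i = l + 1 - muN N l (l + 1 - i)"
proof -
  interpret S: vs "sw ` N" l by (rule vs_sw)
  let ?j = "l + 1 - i"
  have j: "1 \<le> ?j" "?j \<le> l" using assms by auto
  show ?thesis
  proof (cases "i = H + 1")
    case True
    then have "?j = L + 1" using LH by simp
    then show ?thesis using True S.mu_b mu_b Lsw LH by simp
  next
    case False
    then have jn: "?j \<noteq> L + 1" using LH assms by auto
    have j': "?j \<in> {1..l}" using j by simp
    let ?w = "vofN N l ?j"
    have w: "?w \<in> N" "lb ?w = ?j" using vof[OF j' jn] by auto
    have "labN (sw ` N) l (sw ?w) = i" using lab_sw[OF w(1)] w assms by simp
    then have vw: "vofN (sw ` N) l i = sw ?w" using S.vof_eq[of "sw ?w"] w by simp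
    have "labrN (sw ` N) l (sw (parent ?w)) = l + 1 - labrN N l (parent ?w)"
    proof (cases "snd (parent ?w) = []")
      case True
      then show ?thesis using S.b_eq b_eq Lsw LH by (simp add: labrN_def)
    next
      case False
      then have "parent ?w \<in> N" using pc' w by blast
      then show ?thesis using False lab_sw by (simp add: labrN_def)
    qed
    then show ?thesis using S.mu_other[of i] mu_other[OF jn] False Lsw vw by simp
  qed
qed

lemma mul_sw: "mulN (sw ` N) l = tau l (mulN N l)"
proof (rule nth_equalityI)
  show "length (mulN (sw ` N) l) = length (tau l (mulN N l))" by (simp add: mulN_def tau_def)
next
  fix k assume "k < length (mulN (sw ` N) l)"
  then have k: "k < l" by (simp add: mulN_def del: upt_Suc)
  have "mulN (sw ` N) l ! k = muN (sw ` N) l (1 + k)" using k by (simp add: mulN_def del: upt_Suc)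
  moreover have "tau l (mulN N l) ! k = l + 1 - muN N l (l - k)"
    using k by (simp add: mulN_def tau_def rev_nth Suc_diff_Suc del: upt_Suc)
  moreover have "l + 1 - (1 + k) = l - k" by simp
  ultimately show "mulN (sw ` N) l ! k = tau l (mulN N l) ! k"  using mu_sw[of "1+k"] k by (simp only:)
qed

end


context vs begin

lemma keyD:
  assumes l: "l = Suc (Suc k)" and x: "x \<in> N" "\<not> is_low x"
    and mx: "\<And>w. w \<in> N \<Longrightarrow> length (snd w) \<le> length (snd x)"
    and IH: "\<And>N'. vs N' (Suc k) \<Longrightarrow> mulN N' (Suc k) \<in> P1 (Suc k)"
  shows "mulN N l \<in> {mu \<in> Pl l. butlast mu \<in> P1 (Suc k)}"
proof -
  have "L + 2 \<le> l" using high_range[OF x] by simp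
  then have "l \<in> lb ` N" using img by auto
  then obtain u where u: "u \<in> N" "lb u = l" by auto
  have hu: "\<not> is_low u" using high_of_lab u \<open>L + 2 \<le> l\<close> by simp
  have "length (snd x) \<le> length (snd u)"
  proof (rule ccontr)
    assume "\<not> length (snd x) \<le> length (snd u)"
    then have "before x u" by (cases x; cases u) auto
    then have xS: "x \<in> {w \<in> N. \<not> is_low w \<and> before w u}" using x by simp
    have "finite {w \<in> N. \<not> is_low w \<and> before w u}" using fin by simp
    then have "card {w \<in> N. \<not> is_low w \<and> before w u} > 0" using xS card_gt_0_iff by blast
    moreover have "lb u = l - card {w \<in> N. \<not> is_low w \<and> before w u}" using hu by (rule lab_high)
    ultimately show False using u l by linarith
  qed
  then have mu': "\<And>w. w \<in> N \<Longrightarrow> length (snd w) \<le> length (snd u)" using mx le_trans by blast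
  from remove[OF u(1) hu u(2) mu']
  have "vs (N - {u}) (l - 1)" "mulN (N - {u}) (l - 1) = butlast (mulN N l)" by auto
  then have "butlast (mulN N l) \<in> P1 (Suc k)" using IH[of "N - {u}"] l by simp
  then show ?thesis using mul_Pl by simp
qed

end

lemma tau_tau: "\<forall>x \<in> set m. x \<le> l \<Longrightarrow> tau l (tau l m) = m"
  by (induction m) (auto simp: tau_def rev_map)

lemma main: "vs N l \<Longrightarrow> card N = k \<Longrightarrow> mulN N l \<in> P1 l"
proof (induction k arbitrary: N l)
  case 0
  interpret vs N l by fact
  have N: "N = {}" using 0 fin by simp
  have l: "l = 1" using 0 cardN by simp
  have "mulN N l = [muN N l 1]" using l by (simp add: mulN_def)
  also have "muN N l 1 = 1" using mu_b N by simp
  finally show ?case using l by simp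
next
  case (Suc k)
  interpret vs N l by fact
  have l: "l = Suc (Suc k)" using Suc.prems cardN by simp
  have IH: "\<And>N'. vs N' (Suc k) \<Longrightarrow> mulN N' (Suc k) \<in> P1 (Suc k)"
    using Suc.IH vs.cardN by fastforce
  have "N \<noteq> {}" using Suc.prems by auto
  define m where "m = Max ((\<lambda>w. length (snd w)) ` N)"
  have "m \<in> (\<lambda>w. length (snd w)) ` N" unfolding m_def using fin \<open>N \<noteq> {}\<close> by (intro Max_in) auto
  then obtain x where x: "x \<in> N" "length (snd x) = m" by auto
  have mx: "length (snd w) \<le> length (snd x)" if "w \<in> N" for w
    unfolding x(2) m_def using fin that by (intro Max_ge) auto
  let ?D = "{mu \<in> Pl l. butlast mu \<in> P1 (Suc k)}"
  have P: "P1 l = ?D \<union> tau l ` ?D" using l by (simp add: Let_def)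
  show ?case
  proof (cases "is_low x")
    case False
    then show ?thesis using keyD[OF l x(1) False mx IH] P by blast
  next
    case True
    interpret S: vs "sw ` N" l by (rule vs_sw)
    have "mulN (sw ` N) l \<in> ?D"
      by (rule S.keyD[OF l, of "sw x"]) (use x True mx IH in auto)
    moreover have "mulN N l = tau l (mulN (sw ` N) l)"
      using mul_sw tau_tau[of "mulN N l" l] mul_Pl unfolding Pl_def by auto
    ultimately show ?thesis using P by blast
  qed
qed

lemma path_butlast: "path_in t p \<Longrightarrow> path_in t (butlast p)"
proof (induction rule: path_in.induct)
  case (root t) then show ?case using path_in.root by simp
next
  case (child i ts p)
  then show ?case by (cases "p = []") (auto intro: path_in.intros)
qed

lemma path_Node: "path_in (Node ts) p \<longleftrightarrow> p = [] \<or> (\<exists>i q. p = i # q \<and> i < length ts \<and> path_in (ts ! i) q)"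
  by (subst path_in.simps) auto

lemma paths_Node: "{p. path_in (Node ts) p} = insert [] (\<Union>i<length ts. (#) i ` {p. path_in (ts ! i) p})"
  by (auto simp: path_Node)

lemma card_paths: "finite {p. path_in t p} \<and> card {p. path_in t p} = Suc (edges t)"
proof (induction t)
  case (Node ts)
  have IH: "\<And>i. i < length ts \<Longrightarrow> finite {p. path_in (ts ! i) p} \<and> card {p. path_in (ts ! i) p} = Suc (edges (ts ! i))"
    using Node.IH nth_mem by blast
  let ?U = "\<Union>i<length ts. (#) i ` {p. path_in (ts ! i) p}"
  have fU: "finite ?U" using IH by auto
  have "card ?U = (\<Sum>i<length ts. card ((#) i ` {p. path_in (ts ! i) p}))"
    by (rule card_UN_disjoint) (use IH in auto)
  also have "\<dots> = (\<Sum>i<length ts. Suc (edges (ts ! i)))"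
    by (rule sum.cong) (use IH in \<open>auto simp: card_image\<close>)
  also have "\<dots> = length ts + sum_list (map edges ts)"
  proof -
    have s: "(\<Sum>i<n. Suc (f i)) = n + (\<Sum>i<n. f i)" for n and f :: "nat \<Rightarrow> nat"
      by (induction n) auto
    show ?thesis unfolding s by (simp add: sum_list_sum_nth atLeast0LessThan)
  qed
  finally have "card ?U = length ts + sum_list (map edges ts)" .
  moreover have "[] \<notin> ?U" by auto
  ultimately show ?case unfolding paths_Node using fU by simp
qed

lemma nonroot_eq: "nonroot_verts Tm Tp =
  Pair False ` ({p. path_in Tm p} - {[]}) \<union> Pair True ` ({p. path_in Tp p} - {[]})"
  unfolding nonroot_verts_def
  apply (rule set_eqI)
  apply (case_tac x)
  apply (rename_tac s p)
  apply (case_tac s)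
   apply auto
  done

lemma vs_trees: "edges Tm + edges Tp = l - 1 \<Longrightarrow> l \<ge> 1 \<Longrightarrow> vs (nonroot_verts Tm Tp) l"
proof
  let ?A = "Pair False ` ({p. path_in Tm p} - {[]})" and ?B = "Pair True ` ({p. path_in Tp p} - {[]})"
  have fA: "finite ?A" "finite ?B" using card_paths by auto
  then show "finite (nonroot_verts Tm Tp)" unfolding nonroot_eq by simp
  show "\<And>s p. (s, p) \<in> nonroot_verts Tm Tp \<Longrightarrow> p \<noteq> []" unfolding nonroot_verts_def by auto
  show "\<And>s p. (s, p) \<in> nonroot_verts Tm Tp \<Longrightarrow> butlast p \<noteq> [] \<Longrightarrow> (s, butlast p) \<in> nonroot_verts Tm Tp"
    unfolding nonroot_verts_def using path_butlast by auto
  assume e: "edges Tm + edges Tp = l - 1" "l \<ge> 1"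
  have "card ?A = edges Tm" using card_paths[of Tm] path_in.root[of Tm] by (simp add: card_image inj_on_def)
  moreover have "card ?B = edges Tp" using card_paths[of Tp] path_in.root[of Tp] by (simp add: card_image inj_on_def)
  moreover have "card (?A \<union> ?B) = card ?A + card ?B" using fA by (intro card_Un_disjoint) auto
  ultimately show "card (nonroot_verts Tm Tp) + 1 = l" unfolding nonroot_eq using e by simp
qed

theorem lemma4p4:
  fixes l :: nat and Tm Tp :: ptree
  assumes "l \<ge> 1"
    and "edges Tm + edges Tp = l - 1"
  shows "mu_list l Tm Tp \<in> Pl l \<and> mu_list l Tm Tp \<in> P1 l"
proof -
  interpret vs "nonroot_verts Tm Tp" l using vs_trees assms by blast
  show ?thesis unfolding mu_list_eq using mul_Pl main[OF vs_axioms refl] by simp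
qed


end
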